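(* Let $d_1,d_2$ be positive integers. The set $U=\{F\in\Omega_2(d_1,d_2):\ J(F)\text{ is reduced and }\deg J(F)=d_1+d_2-2\}$ is an open subset of $\Omega_2(d_1,d_2)$.
   Context: $\Omega_2(d_1,d_2)$ is the set of polynomial mappings $F=(f,g):\mathbb{C}^2\to\mathbb{C}^2$ with $\deg f\le d_1$, $\deg g\le d_2$, identified with $\mathbb{C}^N$ via coefficients. $J(F)=f_xg_y-f_yg_x$; reduced means square-free as a polynomial. *)

theory Defs
  imports "HOL-Analysis.Analysis" "HOL-Computational_Algebra.Polynomial"
    "HOL-Computational_Algebra.Squarefree"
begin

text \<open>Bivariate polynomials in x, y are represented as complex poly poly:
  the outer variable is y, the inner variable (in the coefficients) is x.
  A coefficient vector is a function c :: nat \<times> nat \<Rightarrow> complex, c(i,j) being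
  the coefficient of x^i y^j.\<close>

definition bipoly :: "(nat \<times> nat \<Rightarrow> complex) \<Rightarrow> complex poly poly" where
  "bipoly c = (\<Sum>(i,j)\<in>{(i,j). c (i,j) \<noteq> 0}. monom (monom (c (i,j)) i) j)"

definition dx :: "complex poly poly \<Rightarrow> complex poly poly" where
  "dx p = map_poly pderiv p"

definition dy :: "complex poly poly \<Rightarrow> complex poly poly" where
  "dy p = pderiv p"

definition tdeg :: "complex poly poly \<Rightarrow> nat" where
  "tdeg p = (if p = 0 then 0 else Max {j + degree (coeff p j) | j. coeff p j \<noteq> 0})"

text \<open>Omega_2(d1,d2), identified with C^N through coefficients: pairs of
  coefficient functions supported on {i+j \<le> d1} resp. {i+j \<le> d2}, with the
  (subspace of the) product topology, which on this finite-dimensional space is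
  the Euclidean topology of C^N.\<close>
definition Omega2 :: "nat \<Rightarrow> nat \<Rightarrow> ((nat \<times> nat \<Rightarrow> complex) \<times> (nat \<times> nat \<Rightarrow> complex)) set" where
  "Omega2 d1 d2 = {(a, b). (\<forall>i j. d1 < i + j \<longrightarrow> a (i,j) = 0) \<and> (\<forall>i j. d2 < i + j \<longrightarrow> b (i,j) = 0)}"

definition jac :: "complex poly poly \<Rightarrow> complex poly poly \<Rightarrow> complex poly poly" where
  "jac f g = dx f * dy g - dy f * dx g"

end

theory Submission imports Defs "HOL-Computational_Algebra.Field_as_Ring" "Subresultants.Subresultant_Gcd"
begin

definition cf :: "complex poly poly \<Rightarrow> nat \<Rightarrow> nat \<Rightarrow> complex" where
  "cf P i j = coeff (coeff P j) i"

definition tb :: "nat \<Rightarrow> complex poly poly \<Rightarrow> bool" where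
  "tb d P \<longleftrightarrow> (\<forall>i j. d < i + j \<longrightarrow> cf P i j = 0)"

lemma pp_eqI: "(\<And>i j. cf P i j = cf Q i j) \<Longrightarrow> P = Q"
  unfolding cf_def by (intro poly_eqI) auto

lemma cf_add[simp]: "cf (P + Q) i j = cf P i j + cf Q i j"
  by (simp add: cf_def)
lemma cf_diff[simp]: "cf (P - Q) i j = cf P i j - cf Q i j"
  by (simp add: cf_def)
lemma cf_sum: "cf (sum f A) i j = (\<Sum>x\<in>A. cf (f x) i j)"
  by (induction A rule: infinite_finite_induct) (auto simp: cf_def)
lemma cf_monom: "cf (monom (monom a k) l) i j = (if k = i \<and> l = j then a else 0)"
  by (auto simp: cf_def coeff_monom)

lemma cf_mult: "cf (P * Q) i j = (\<Sum>a\<le>j. \<Sum>b\<le>i. cf P b a * cf Q (i - b) (j - a))"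
  by (simp add: cf_def coeff_mult coeff_sum)

lemma cf_dx: "cf (dx P) i j = of_nat (Suc i) * cf P (Suc i) j"
  by (simp add: cf_def dx_def coeff_map_poly coeff_pderiv)

lemma cf_dy: "cf (dy P) i j = of_nat (Suc j) * cf P i (Suc j)"
  by (simp add: cf_def dy_def coeff_pderiv of_nat_poly)

lemma bipoly_cf:
  assumes "\<forall>i j. d < i + j \<longrightarrow> a (i,j) = 0"
  shows "cf (bipoly a) i j = a (i,j)"
proof -
  let ?S = "{(i,j). a (i,j) \<noteq> 0}"
  have "?S \<subseteq> {0..d} \<times> {0..d}" using assms by force
  hence fin: "finite ?S" by (rule finite_subset) auto
  have "cf (bipoly a) i j = (\<Sum>x\<in>?S. (if x = (i,j) then a x else 0))"
    unfolding bipoly_def cf_sum by (intro sum.cong) (auto simp: cf_monom split: if_splits)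
  also have "\<dots> = a (i,j)" using fin by (auto simp: sum.delta)
  finally show ?thesis .
qed

lemma tb_bipoly: "\<forall>i j. d < i + j \<longrightarrow> a (i,j) = 0 \<Longrightarrow> tb d (bipoly a)"
  unfolding tb_def using bipoly_cf by metis

lemma tb_mono: "tb d P \<Longrightarrow> d \<le> d' \<Longrightarrow> tb d' P"
  unfolding tb_def by auto

lemma tb_mult: assumes "tb d1 P" "tb d2 Q" shows "tb (d1 + d2) (P * Q)"
  unfolding tb_def
proof (intro allI impI)
  fix i j assume ij: "d1 + d2 < i + j"
  have "cf P b a * cf Q (i - b) (j - a) = 0" if "a \<le> j" "b \<le> i" for a b
  proof (cases "d1 < b + a")
    case True thus ?thesis using assms(1) unfolding tb_def by auto
  next
    case False
    hence "d2 < (i - b) + (j - a)" using ij that by linarith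
    thus ?thesis using assms(2) unfolding tb_def by auto
  qed
  thus "cf (P * Q) i j = 0" unfolding cf_mult by (auto intro!: sum.neutral)
qed

lemma tb_diff: "tb d P \<Longrightarrow> tb d Q \<Longrightarrow> tb d (P - Q)"
  unfolding tb_def by auto

lemma tb_dx: "tb d P \<Longrightarrow> tb (d - 1) (dx P)"
  unfolding tb_def cf_dx by (auto)

lemma tb_dy: "tb d P \<Longrightarrow> tb (d - 1) (dy P)"
  unfolding tb_def cf_dy by (auto)

lemma tb_jac: assumes "tb d1 f" "tb d2 g" shows "tb (d1 - 1 + (d2 - 1)) (jac f g)"
proof -
  have "tb (d1 - 1 + (d2 - 1)) (dx f * dy g)" by (rule tb_mult) (use assms tb_dx tb_dy in auto)
  moreover have "tb (d1 - 1 + (d2 - 1)) (dy f * dx g)" by (rule tb_mult) (use assms tb_dx tb_dy in auto)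
  ultimately show ?thesis unfolding jac_def by (intro tb_diff)
qed


lemma tdeg_eq:
  assumes tb: "tb n P" and nz: "cf P i (n - i) \<noteq> 0" and i: "i \<le> n"
  shows "tdeg P = n"
proof -
  let ?M = "{j + degree (coeff P j) | j. coeff P j \<noteq> 0}"
  have P0: "P \<noteq> 0" using nz by (auto simp: cf_def)
  have bound: "j + degree (coeff P j) \<le> n" if "coeff P j \<noteq> 0" for j
  proof -
    have "cf P (degree (coeff P j)) j \<noteq> 0" using that by (simp add: cf_def)
    thus ?thesis using tb unfolding tb_def by force
  qed
  have c: "coeff P (n - i) \<noteq> 0" using nz by (auto simp: cf_def)
  have "i \<le> degree (coeff P (n - i))" using nz by (auto simp: cf_def intro: le_degree)
  with bound[OF c] i have mem: "n \<in> ?M" using c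
    by (intro CollectI exI[of _ "n - i"]) auto
  have fin: "finite ?M" by (rule finite_subset[of _ "{0..n}"]) (use bound in auto)
  have "Max ?M = n" by (rule Max_eqI[OF fin]) (use bound mem in auto)
  thus ?thesis using P0 unfolding tdeg_def by simp
qed

lemma tdeg_top:
  assumes tb: "tb n P" and P0: "P \<noteq> 0" and td: "tdeg P = n"
  shows "\<exists>i\<le>n. cf P i (n - i) \<noteq> 0"
proof -
  let ?M = "{j + degree (coeff P j) | j. coeff P j \<noteq> 0}"
  have bound: "j + degree (coeff P j) \<le> n" if "coeff P j \<noteq> 0" for j
  proof -
    have "cf P (degree (coeff P j)) j \<noteq> 0" using that by (simp add: cf_def)
    thus ?thesis using tb unfolding tb_def by force
  qed
  have fin: "finite ?M" by (rule finite_subset[of _ "{0..n}"]) (use bound in auto)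
  obtain j0 where "coeff P j0 \<noteq> 0" using P0 by (metis leading_coeff_0_iff)
  hence ne: "?M \<noteq> {}" by auto
  have "Max ?M \<in> ?M" using Max_in[OF fin ne] .
  moreover have "Max ?M = n" using td P0 unfolding tdeg_def by simp
  ultimately obtain j where j: "coeff P j \<noteq> 0" "j + degree (coeff P j) = n" by auto
  show ?thesis
    by (rule exI[of _ "degree (coeff P j)"]) (use j in \<open>auto simp: cf_def\<close>)
qed

definition ccont :: "'a::topological_space set \<Rightarrow> ('a \<Rightarrow> complex poly poly) \<Rightarrow> bool" where
  "ccont S \<Phi> \<longleftrightarrow> (\<forall>i j. continuous_on S (\<lambda>F. cf (\<Phi> F) i j))"

lemma ccont_mult: "ccont S f \<Longrightarrow> ccont S g \<Longrightarrow> ccont S (\<lambda>F. f F * g F)"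
  unfolding ccont_def cf_mult by (intro allI continuous_intros) auto

lemma ccont_diff: "ccont S f \<Longrightarrow> ccont S g \<Longrightarrow> ccont S (\<lambda>F. f F - g F)"
  unfolding ccont_def cf_diff by (intro allI continuous_intros) auto

lemma ccont_dx: "ccont S f \<Longrightarrow> ccont S (\<lambda>F. dx (f F))"
  unfolding ccont_def cf_dx by (intro allI continuous_intros) auto

lemma ccont_dy: "ccont S f \<Longrightarrow> ccont S (\<lambda>F. dy (f F))"
  unfolding ccont_def cf_dy by (intro allI continuous_intros) auto

lemma ccont_jac: "ccont S f \<Longrightarrow> ccont S g \<Longrightarrow> ccont S (\<lambda>F. jac (f F) (g F))"
  unfolding jac_def by (intro ccont_diff ccont_mult ccont_dx ccont_dy)

lemma cont_fst_coord: "continuous_on S (\<lambda>F::((nat \<times> nat \<Rightarrow> complex) \<times> (nat \<times> nat \<Rightarrow> complex)). fst F k)"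
proof -
  have "continuous_on UNIV ((\<lambda>x. x k) \<circ> fst)"
    by (intro continuous_on_compose continuous_on_fst continuous_on_id) (auto intro: continuous_on_subset[OF continuous_on_product_coordinates])
  thus ?thesis by (auto simp: comp_def intro: continuous_on_subset)
qed

lemma cont_snd_coord: "continuous_on S (\<lambda>F::((nat \<times> nat \<Rightarrow> complex) \<times> (nat \<times> nat \<Rightarrow> complex)). snd F k)"
proof -
  have "continuous_on UNIV ((\<lambda>x. x k) \<circ> snd)"
    by (intro continuous_on_compose continuous_on_snd continuous_on_id) (auto intro: continuous_on_subset[OF continuous_on_product_coordinates])
  thus ?thesis by (auto simp: comp_def intro: continuous_on_subset)
qed

lemma ccont_bipoly_fst: "ccont (Omega2 d1 d2) (\<lambda>F. bipoly (fst F))"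
  unfolding ccont_def
proof (intro allI)
  fix i j
  show "continuous_on (Omega2 d1 d2) (\<lambda>F. cf (bipoly (fst F)) i j)"
  proof (rule continuous_on_eq[OF cont_fst_coord[of _ "(i,j)"]])
    fix F assume "F \<in> Omega2 d1 d2"
    thus "fst F (i,j) = cf (bipoly (fst F)) i j"
      by (intro bipoly_cf[of d1, symmetric]) (auto simp: Omega2_def)
  qed
qed

lemma ccont_bipoly_snd: "ccont (Omega2 d1 d2) (\<lambda>F. bipoly (snd F))"
  unfolding ccont_def
proof (intro allI)
  fix i j
  show "continuous_on (Omega2 d1 d2) (\<lambda>F. cf (bipoly (snd F)) i j)"
  proof (rule continuous_on_eq[OF cont_snd_coord[of _ "(i,j)"]])
    fix F assume "F \<in> Omega2 d1 d2"
    thus "snd F (i,j) = cf (bipoly (snd F)) i j"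
      by (intro bipoly_cf[of d2, symmetric]) (auto simp: Omega2_def)
  qed
qed


definition L :: "complex \<Rightarrow> complex poly poly" where "L b = [:[:b:]:]"
definition E :: "complex poly poly \<Rightarrow> complex poly \<Rightarrow> complex poly poly" where
  "E U a = poly (map_poly L a) U"
definition ev2 :: "complex poly poly \<Rightarrow> complex poly poly \<Rightarrow> complex poly poly \<Rightarrow> complex poly poly" where
  "ev2 U V P = poly (map_poly (E U) P) V"
definition Xc :: "complex poly poly" where "Xc = [:[:0,1:]:]"
definition Yc :: "complex poly poly" where "Yc = [:0,1:]"

lemma L_hom: "comm_ring_hom L"
  by unfold_locales (auto simp: L_def)

interpretation Lh: map_poly_comm_ring_hom L
  using L_hom by (simp add: map_poly_comm_ring_hom_def)

lemma E_hom: "comm_ring_hom (E U)"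
  by unfold_locales (auto simp: E_def Lh.hom_add Lh.hom_mult)

lemma ev2_hom: "comm_ring_hom (ev2 U V)"
proof -
  interpret Eh: map_poly_comm_ring_hom "E U"
    using E_hom by (simp add: map_poly_comm_ring_hom_def)
  show ?thesis by unfold_locales (auto simp: ev2_def Eh.hom_add Eh.hom_mult)
qed

lemma L0[simp]: "L 0 = 0" by (simp add: L_def)
lemma E0[simp]: "E U 0 = 0" by (simp add: E_def)

lemma E_pCons: "E U (pCons b a) = L b + U * E U a"
  by (simp add: E_def Polynomial.map_poly_pCons)

lemma ev2_pCons: "ev2 U V (pCons a P) = E U a + V * ev2 U V P"
  by (simp add: ev2_def Polynomial.map_poly_pCons)

lemma ev2_0[simp]: "ev2 U V 0 = 0" by (simp add: ev2_def)

lemma ev2_const: "ev2 U V [:a:] = E U a"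
  using ev2_pCons[of U V a 0] by simp

lemma E_const: "E U [:b:] = L b"
  using E_pCons[of U b 0] by simp

lemma hom_E:
  assumes "comm_ring_hom \<phi>" "\<And>b. \<phi> (L b) = L b"
  shows "\<phi> (E U a) = E (\<phi> U) a"
proof (induction a)
  case 0
  interpret comm_ring_hom \<phi> by fact
  show ?case by simp
next
  case (pCons b a)
  interpret comm_ring_hom \<phi> by fact
  show ?case by (simp add: E_pCons hom_add hom_mult pCons.IH assms(2))
qed

lemma hom_ev2:
  assumes "comm_ring_hom \<phi>" "\<And>b. \<phi> (L b) = L b"
  shows "\<phi> (ev2 U V P) = ev2 (\<phi> U) (\<phi> V) P"
proof (induction P)
  case 0
  interpret comm_ring_hom \<phi> by fact
  show ?case by (simp add: ev2_def)
next
  case (pCons a P)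
  interpret comm_ring_hom \<phi> by fact
  show ?case by (simp add: ev2_pCons hom_add hom_mult pCons.IH hom_E[OF assms])
qed

lemma E_1[simp]: "E U 1 = 1" using E_const[of U 1] by (simp add: L_def)

lemma ev2_L[simp]: "ev2 U V (L b) = L b"
  by (simp add: L_def ev2_const E_const)

lemma ev2_Xc[simp]: "ev2 U V Xc = U"
  by (simp add: Xc_def ev2_const E_pCons E_const L_def)

lemma ev2_Yc[simp]: "ev2 U V Yc = V"
proof -
  have "E U 1 = 1" using E_const[of U 1] by (simp add: L_def)
  moreover have "ev2 U V 1 = 1" using ev2_const[of U V 1] \<open>E U 1 = 1\<close> by simp
  ultimately show ?thesis by (simp add: Yc_def ev2_pCons ev2_const)
qed

lemma E_Xc: "E Xc a = [:a:]"
  by (induction a) (auto simp: E_pCons Xc_def L_def)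

lemma ev2_id: "ev2 Xc Yc P = P"
  by (induction P) (auto simp: ev2_pCons E_Xc Yc_def)

definition sig :: "complex \<Rightarrow> complex poly poly \<Rightarrow> complex poly poly" where
  "sig c = ev2 (Xc + L c * Yc) Yc"

lemma sig_hom: "comm_ring_hom (sig c)"
  unfolding sig_def by (rule ev2_hom)

lemma sig_inv: "sig (- c) (sig c P) = P"
proof -
  interpret comm_ring_hom "sig (-c)" by (rule sig_hom)
  have "sig (- c) (sig c P) = ev2 (sig (-c) (Xc + L c * Yc)) (sig (-c) Yc) P"
    unfolding sig_def[of c] by (rule hom_ev2[OF sig_hom]) (simp add: sig_def)
  also have "sig (-c) (Xc + L c * Yc) = Xc"
  proof -
    have "L (-c) + L c = 0" by (simp add: L_def)
    have "sig (-c) (Xc + L c * Yc) = sig (-c) Xc + sig (-c) (L c) * sig (-c) Yc"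
      by (simp add: hom_add hom_mult)
    also have "\<dots> = Xc + (L (-c) + L c) * Yc" by (simp add: sig_def algebra_simps)
    finally show ?thesis using \<open>L (-c) + L c = 0\<close> by simp
  qed
  also have "sig (-c) Yc = Yc" by (simp add: sig_def)
  finally show ?thesis by (simp add: ev2_id)
qed

lemma sig_squarefree:
  assumes "squarefree (sig c P)" shows "squarefree P"
  unfolding squarefree_def
proof (intro allI impI)
  fix A assume "A\<^sup>2 dvd P"
  interpret s: comm_ring_hom "sig c" by (rule sig_hom)
  interpret t: comm_ring_hom "sig (-c)" by (rule sig_hom)
  have "(sig c A)\<^sup>2 dvd sig c P" using \<open>A\<^sup>2 dvd P\<close> by (metis s.hom_dvd s.hom_power)
  hence "sig c A dvd 1" using assms unfolding squarefree_def by blast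
  hence "sig (-c) (sig c A) dvd sig (-c) 1" by (rule t.hom_dvd)
  thus "A dvd 1" by (simp add: sig_inv)
qed


lemma mono_eq: "L a * Xc ^ i * Yc ^ j = monom (monom a i) j"
proof -
  have "Xc ^ i = [:[:0,1:] ^ i:]" by (simp add: Xc_def poly_const_pow)
  also have "[:0,1:] ^ i = (monom 1 i :: complex poly)" by (simp only: x_as_monom x_pow_n)
  finally have "Xc ^ i = [:monom 1 i:]" .
  moreover have "Yc ^ j = monom 1 j" by (simp only: Yc_def x_as_monom x_pow_n)
  ultimately show ?thesis by (simp add: L_def smult_monom monom_altdef[symmetric] mult.commute)
qed

lemma double_delta:
  "(\<Sum>j\<le>(n::nat). \<Sum>i\<le>(m::nat). if i = k \<and> j = l then a else 0) = (if k \<le> m \<and> l \<le> n then a else (0::'a::comm_monoid_add))"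
proof -
  have i: "(\<Sum>i\<le>m. if i = k then a else 0) = (if k \<le> m then a else 0)"
    by (simp add: sum.delta)
  have o: "\<And>C. (\<Sum>j\<le>n. if j = l then C else 0) = (if l \<le> n then C else (0::'a))"
    by (simp add: sum.delta)
  have "(\<Sum>j\<le>n. \<Sum>i\<le>m. if i = k \<and> j = l then a else 0)
      = (\<Sum>j\<le>n. if j = l then (\<Sum>i\<le>m. if i = k then a else 0) else 0)"
    by (intro sum.cong) auto
  also have "\<dots> = (if l \<le> n then (\<Sum>i\<le>m. if i = k then a else 0) else 0)" by (rule o)
  finally show ?thesis unfolding i by auto
qed

lemma expand: assumes "tb n P" shows "P = (\<Sum>j\<le>n. \<Sum>i\<le>n. L (cf P i j) * Xc ^ i * Yc ^ j)"
proof (rule pp_eqI)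
  fix k l
  have "cf (\<Sum>j\<le>n. \<Sum>i\<le>n. L (cf P i j) * Xc ^ i * Yc ^ j) k l
      = (\<Sum>j\<le>n. \<Sum>i\<le>n. (if i = k \<and> j = l then cf P k l else 0))"
    unfolding cf_sum mono_eq cf_monom by (intro sum.cong) auto
  also have "\<dots> = (if k \<le> n \<and> l \<le> n then cf P k l else 0)"
    by (rule double_delta)
  also have "\<dots> = cf P k l" using assms unfolding tb_def by auto
  finally show "cf P k l = cf (\<Sum>j\<le>n. \<Sum>i\<le>n. L (cf P i j) * Xc ^ i * Yc ^ j) k l" by simp
qed


definition Uc :: "complex \<Rightarrow> complex poly poly" where "Uc c = Xc + L c * Yc"

lemma sig_L[simp]: "sig c (L a) = L a" by (simp add: sig_def)
lemma sig_Xc[simp]: "sig c Xc = Uc c" by (simp add: sig_def Uc_def)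
lemma sig_Yc[simp]: "sig c Yc = Yc" by (simp add: sig_def)

lemma sig_expand: assumes "tb n P"
  shows "sig c P = (\<Sum>j\<le>n. \<Sum>i\<le>n. L (cf P i j) * Uc c ^ i * Yc ^ j)"
proof -
  interpret comm_ring_hom "sig c" by (rule sig_hom)
  have "sig c P = sig c (\<Sum>j\<le>n. \<Sum>i\<le>n. L (cf P i j) * Xc ^ i * Yc ^ j)"
    using expand[OF assms] by simp
  also have "\<dots> = (\<Sum>j\<le>n. \<Sum>i\<le>n. L (cf P i j) * Uc c ^ i * Yc ^ j)"
    by (simp add: hom_sum hom_mult hom_power)
  finally show ?thesis .
qed

lemma coeff_LM: "coeff (L a * M) k = [:a:] * coeff M k"
  by (simp add: L_def)

lemma coeff_sig: assumes "tb n P"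
  shows "coeff (sig c P) k = (\<Sum>j\<le>n. \<Sum>i\<le>n. [:cf P i j:] * coeff (Uc c ^ i * Yc ^ j) k)"
  unfolding sig_expand[OF assms] by (simp add: coeff_sum coeff_LM mult.assoc)

lemma Uc_pCons: "Uc c = pCons [:0,1:] [:[:c:]:]"
  by (simp add: Uc_def Xc_def L_def Yc_def)

lemma degM: "degree (Uc c ^ i * Yc ^ j) \<le> i + j"
proof -
  have d1: "degree (Uc c) \<le> 1" by (simp add: Uc_pCons)
  have "degree (Uc c ^ i) \<le> i * degree (Uc c)" using degree_power_le[of "Uc c" i] by (simp add: mult.commute)
  also have "\<dots> \<le> i * 1" using d1 by (rule mult_le_mono2)
  finally have a: "degree (Uc c ^ i) \<le> i" by simp
  have "degree (Yc ^ j) \<le> j * degree Yc" using degree_power_le[of Yc j] by (simp add: mult.commute)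
  hence b: "degree (Yc ^ j) \<le> j" by (simp add: Yc_def)
  have "degree (Uc c ^ i * Yc ^ j) \<le> degree (Uc c ^ i) + degree (Yc ^ j)" by (rule degree_mult_le)
  thus ?thesis using a b by linarith
qed

lemma coeffM: assumes "c \<noteq> 0" shows "coeff (Uc c ^ i * Yc ^ j) (i + j) = [:c ^ i:]"
proof -
  have dU: "degree (Uc c) = 1" using assms by (simp add: Uc_pCons)
  have lU: "lead_coeff (Uc c) = [:c:]" using assms by (simp add: Uc_pCons)
  have "Uc c \<noteq> 0" using dU by auto
  hence d1: "degree (Uc c ^ i) = i" by (simp add: degree_power_eq dU)
  have d2: "degree (Yc ^ j) = j" by (simp add: Yc_def degree_power_eq)
  have "coeff (Uc c ^ i * Yc ^ j) (degree (Uc c ^ i) + degree (Yc ^ j))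
      = lead_coeff (Uc c ^ i) * lead_coeff (Yc ^ j)" by (rule coeff_mult_degree_sum)
  also have "\<dots> = [:c ^ i:]" by (simp add: lead_coeff_power lU Yc_def poly_const_pow)
  finally show ?thesis by (simp add: d1 d2)
qed

lemma sig_high: assumes "tb n P" "n < k" shows "coeff (sig c P) k = 0"
  unfolding coeff_sig[OF assms(1)]
proof (intro sum.neutral ballI)
  fix i j assume "i \<in> {..n}" "j \<in> {..n}"
  show "[:cf P i j:] * coeff (Uc c ^ i * Yc ^ j) k = 0"
  proof (cases "n < i + j")
    case True thus ?thesis using assms(1) unfolding tb_def by auto
  next
    case False
    hence "degree (Uc c ^ i * Yc ^ j) < k" using degM[of c i j] assms(2) by linarith
    thus ?thesis by (simp add: coeff_eq_0)
  qed
qed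

definition hp :: "complex poly poly \<Rightarrow> nat \<Rightarrow> complex poly" where
  "hp P n = (\<Sum>i\<le>n. monom (cf P i (n - i)) i)"

lemma poly_hp: "poly (hp P n) c = (\<Sum>i\<le>n. cf P i (n - i) * c ^ i)"
  by (simp add: hp_def poly_sum poly_monom)

lemma coeff_hp: "i \<le> n \<Longrightarrow> coeff (hp P n) i = cf P i (n - i)"
  by (simp add: hp_def coeff_sum coeff_monom)

lemma const_sum: "(\<Sum>i\<in>A. [:f i:]) = [:(\<Sum>i\<in>A. f i):]"
  by (induction A rule: infinite_finite_induct) auto

lemma sig_top: assumes "tb n P" "c \<noteq> 0" shows "coeff (sig c P) n = [:poly (hp P n) c:]"
proof -
  have "coeff (sig c P) n = (\<Sum>j\<le>n. \<Sum>i\<le>n. if i + j = n then [:cf P i j * c ^ i:] else 0)"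
    unfolding coeff_sig[OF assms(1)]
  proof (intro sum.cong refl)
    fix i j assume "i \<in> {..n}" "j \<in> {..n}"
    show "[:cf P i j:] * coeff (Uc c ^ i * Yc ^ j) n = (if i + j = n then [:cf P i j * c ^ i:] else 0)"
    proof (cases "i + j = n")
      case True thus ?thesis using coeffM[OF assms(2), of i j] by simp
    next
      case False
      show ?thesis
      proof (cases "n < i + j")
        case True thus ?thesis using assms(1) False unfolding tb_def by auto
      next
        case F2: False
        hence "degree (Uc c ^ i * Yc ^ j) < n" using degM[of c i j] False by linarith
        thus ?thesis using False by (simp add: coeff_eq_0)
      qed
    qed
  qed
  also have "\<dots> = (\<Sum>i\<le>n. \<Sum>j\<le>n. if i + j = n then [:cf P i j * c ^ i:] else 0)"
    by (rule sum.swap)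
  also have "\<dots> = (\<Sum>i\<le>n. [:cf P i (n - i) * c ^ i:])"
  proof (intro sum.cong refl)
    fix i assume i: "i \<in> {..n}"
    have "(\<Sum>j\<le>n. if i + j = n then [:cf P i j * c ^ i:] else 0)
        = (\<Sum>j\<le>n. if j = n - i then [:cf P i (n - i) * c ^ i:] else 0)"
      using i by (intro sum.cong) auto
    also have "\<dots> = [:cf P i (n - i) * c ^ i:]" by (simp add: sum.delta)
    finally show "(\<Sum>j\<le>n. if i + j = n then [:cf P i j * c ^ i:] else 0) = [:cf P i (n - i) * c ^ i:]" .
  qed
  also have "\<dots> = [:poly (hp P n) c:]" by (simp add: const_sum poly_hp)
  finally show ?thesis .
qed


abbreviation ev :: "complex \<Rightarrow> complex poly poly \<Rightarrow> complex poly" where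
  "ev x0 \<equiv> map_poly (\<lambda>a. poly a x0)"

lemma deg_ev: assumes "poly (lead_coeff P) x0 \<noteq> 0" shows "degree (ev x0 P) = degree P"
proof -
  have "coeff (ev x0 P) (degree P) \<noteq> 0" using assms by (simp add: poly_hom.coeff_map_poly_hom)
  hence "degree P \<le> degree (ev x0 P)" by (rule le_degree)
  moreover have "degree (ev x0 P) \<le> degree P" by (rule degree_map_poly_le)
  ultimately show ?thesis by simp
qed

lemma sf_from_res:
  fixes Q :: "complex poly poly"
  assumes lc: "lead_coeff Q = [:h:]" and h: "h \<noteq> 0"
    and res: "resultant (ev x0 Q) (pderiv (ev x0 Q)) \<noteq> 0"
  shows "squarefree Q"
  unfolding squarefree_def
proof (intro allI impI)
  fix A assume "A\<^sup>2 dvd Q"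
  then obtain B where "Q = A\<^sup>2 * B" by (rule dvdE)
  hence QAB: "Q = A * (A * B)" by (simp add: power2_eq_square mult.assoc)
  interpret eh: map_poly_comm_ring_hom "\<lambda>a. poly a x0" by unfold_locales
  have Q0: "Q \<noteq> 0" using lc h by auto
  have "lead_coeff Q = lead_coeff A * (lead_coeff A * lead_coeff B)" by (simp add: QAB lead_coeff_mult)
  hence "lead_coeff A dvd [:h:]" using lc by (metis dvd_triv_left)
  moreover have "is_unit [:h:]" using h by (simp add: is_unit_const_poly_iff)
  ultimately have "is_unit (lead_coeff A)" by (rule dvd_unit_imp_unit)
  then obtain \<alpha> where al1: "lead_coeff A = [:\<alpha>:]" "\<alpha> dvd 1" by (rule is_unit_polyE)
  have al: "lead_coeff A = [:\<alpha>:]" "\<alpha> \<noteq> 0" using al1 by auto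
  show "A dvd 1"
  proof (cases "degree A = 0")
    case True
    hence "A = [:[:\<alpha>:]:]" using al(1) by (metis degree_0_id)
    thus ?thesis using al(2) by (simp add: is_unit_const_poly_iff)
  next
    case False
    let ?a = "ev x0 A" and ?b = "ev x0 B" and ?q = "ev x0 Q"
    have "degree ?a = degree A" using al by (intro deg_ev) simp
    hence da: "degree ?a \<noteq> 0" using False by simp
    have q0: "?q \<noteq> 0"
    proof -
      have "coeff ?q (degree Q) = h" using lc by (simp add: poly_hom.coeff_map_poly_hom)
      thus ?thesis using h by (metis coeff_0)
    qed
    have qab: "?q = ?a * (?a * ?b)" by (simp add: QAB eh.hom_mult)
    have "?a dvd ?q" using qab by simp
    moreover have "?a dvd pderiv ?q"
      unfolding qab pderiv_mult by (simp add: dvd_add)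
    ultimately have "?a dvd gcd ?q (pderiv ?q)" by simp
    moreover have "gcd ?q (pderiv ?q) \<noteq> 0" using q0 by simp
    ultimately have "degree ?a \<le> degree (gcd ?q (pderiv ?q))" by (rule dvd_imp_degree_le)
    hence "degree (gcd ?q (pderiv ?q)) \<noteq> 0" using da by simp
    hence "resultant ?q (pderiv ?q) = 0" using resultant_0_gcd by blast
    thus ?thesis using res by simp
  qed
qed

lemma res_nonzero:
  fixes Q :: "complex poly poly"
  assumes sf: "squarefree Q" and lc: "lead_coeff Q = [:h:]" and h: "h \<noteq> 0"
  shows "resultant Q (pderiv Q) \<noteq> 0"
proof
  assume "resultant Q (pderiv Q) = 0"
  hence dG: "degree (gcd Q (pderiv Q)) \<noteq> 0" using resultant_0_gcd by blast
  have Q0: "Q \<noteq> 0" using lc h by auto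
  have G0: "gcd Q (pderiv Q) \<noteq> 0" using Q0 by simp
  have Gu: "\<not> is_unit (gcd Q (pderiv Q))" using dG by (auto simp: is_unit_poly_iff)
  obtain p where p: "p dvd gcd Q (pderiv Q)" "prime p" using prime_divisor_exists[OF G0 Gu] by blast
  have pQ: "p dvd Q" and pQ': "p dvd pderiv Q" using p(1) by (auto intro: dvd_trans)
  then obtain r where Qr: "Q = p * r" by (auto elim: dvdE)
  have "p dvd r * pderiv p"
  proof -
    have "pderiv Q = p * pderiv r + r * pderiv p" unfolding Qr pderiv_mult by simp
    thus ?thesis using pQ' by (metis dvd_add_right_iff dvd_triv_left)
  qed
  hence "p dvd r \<or> p dvd pderiv p" using p(2) prime_dvd_mult_iff by blast
  thus False
  proof
    assume "p dvd r"
    hence "p\<^sup>2 dvd Q" unfolding Qr power2_eq_square by simp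
    hence "is_unit p" using sf unfolding squarefree_def by blast
    thus False using p(2) by (simp add: not_prime_unit)
  next
    assume pp: "p dvd pderiv p"
    show False
    proof (cases "degree p = 0")
      case True
      have "lead_coeff Q = lead_coeff p * lead_coeff r" by (simp add: Qr lead_coeff_mult)
      hence "lead_coeff p dvd [:h:]" using lc by (metis dvd_triv_left)
      moreover have "is_unit [:h:]" using h by (simp add: is_unit_const_poly_iff)
      ultimately have "is_unit (lead_coeff p)" by (rule dvd_unit_imp_unit)
      moreover have "p = [:lead_coeff p:]" using True by (metis degree_0_id)
      ultimately have "is_unit p" by (metis is_unit_const_poly_iff)
      thus False using p(2) by (simp add: not_prime_unit)
    next
      case False
      hence "pderiv p \<noteq> 0" by (simp add: pderiv_eq_0_iff)
      hence "degree p \<le> degree (pderiv p)" using pp by (rule dvd_imp_degree_le[rotated])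
      thus False using False by (simp add: degree_pderiv)
    qed
  qed
qed


lemma cont_if_const: "continuous_on S f \<Longrightarrow> continuous_on S g \<Longrightarrow> continuous_on S (\<lambda>x. if b then f x else g x)"
  by (cases b) auto

lemma cont_det_syl:
  fixes q :: "'a::topological_space \<Rightarrow> complex poly"
  assumes c1: "\<And>k. continuous_on S (\<lambda>F. coeff (q F) k)"
  shows "continuous_on S (\<lambda>F. Determinant.det (sylvester_mat_sub m n (q F) (pderiv (q F))))"
proof -
  let ?A = "\<lambda>F. sylvester_mat_sub m n (q F) (pderiv (q F))"
  have c2: "continuous_on S (\<lambda>F. coeff (pderiv (q F)) k)" for k
    unfolding coeff_pderiv by (intro continuous_intros c1)
  have ent: "continuous_on S (\<lambda>F. ?A F $$ (i, j))" if "i < m + n" "j < m + n" for i j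
    unfolding sylvester_mat_sub_index[OF that]
    by (intro cont_if_const continuous_on_const c1 c2)
  have "continuous_on S (\<lambda>F. \<Sum>p | p permutes {0..<m+n}. of_int (sign p) * (\<Prod>i = 0..<m+n. ?A F $$ (i, p i)))"
  proof (intro continuous_on_sum continuous_on_mult continuous_on_const continuous_on_prod ent)
    fix p i assume "p \<in> {p. p permutes {0..<m+n}}" "i \<in> {0..<m+n}"
    thus "i < m + n" "p i < m + n" by (auto simp: permutes_in_image)
  qed
  thus ?thesis
    by (rule continuous_on_eq) (simp add: det_def'[OF sylvester_mat_sub_carrier])
qed

lemma sig_deg:
  assumes "tb n P" "c \<noteq> 0" "poly (hp P n) c \<noteq> 0"
  shows "degree (sig c P) = n" "lead_coeff (sig c P) = [:poly (hp P n) c:]"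
proof -
  have top: "coeff (sig c P) n = [:poly (hp P n) c:]" by (rule sig_top[OF assms(1,2)])
  have "degree (sig c P) \<le> n" by (rule degree_le) (use sig_high[OF assms(1)] in auto)
  moreover have "n \<le> degree (sig c P)" by (rule le_degree) (use top assms(3) in auto)
  ultimately show d: "degree (sig c P) = n" by simp
  show "lead_coeff (sig c P) = [:poly (hp P n) c:]" using d top by simp
qed


lemma coeff_ev_sig: "tb n P \<Longrightarrow>
  coeff (ev x0 (sig c P)) k = (\<Sum>j\<le>n. \<Sum>i\<le>n. cf P i j * poly (coeff (Uc c ^ i * Yc ^ j) k) x0)"
  by (simp add: poly_hom.coeff_map_poly_hom coeff_sig[of n] poly_sum)

theorem lemma3p3:
  fixes d1 d2 :: nat
  assumes "0 < d1" and "0 < d2"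
  shows "openin (top_of_set (Omega2 d1 d2))
           {F \<in> Omega2 d1 d2. squarefree (jac (bipoly (fst F)) (bipoly (snd F)))
                              \<and> tdeg (jac (bipoly (fst F)) (bipoly (snd F))) = d1 + d2 - 2}"
    (is "openin _ ?U")
proof -
  define S where "S = Omega2 d1 d2"
  define n where "n = d1 + d2 - 2"
  define PF where "PF F = jac (bipoly (fst F)) (bipoly (snd F))" for F
  have tbF: "tb n (PF F)" if "F \<in> S" for F
  proof -
    have "tb (d1 - 1 + (d2 - 1)) (PF F)" unfolding PF_def
      by (intro tb_jac tb_bipoly) (use that in \<open>auto simp: S_def Omega2_def\<close>)
    moreover have "d1 - 1 + (d2 - 1) = n" using assms by (simp add: n_def)
    ultimately show ?thesis by simp
  qed
  have ccP: "ccont S PF" unfolding PF_def S_def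
    by (intro ccont_jac ccont_bipoly_fst ccont_bipoly_snd)
  have cfc: "continuous_on S (\<lambda>F. cf (PF F) i j)" for i j using ccP unfolding ccont_def by blast
  have U_eq: "?U = {F \<in> S. squarefree (PF F) \<and> tdeg (PF F) = n}" by (simp add: S_def PF_def n_def)
  have key: "\<exists>T. openin (top_of_set S) T \<and> F0 \<in> T \<and> T \<subseteq> {F \<in> S. squarefree (PF F) \<and> tdeg (PF F) = n}"
    if F0: "F0 \<in> {F \<in> S. squarefree (PF F) \<and> tdeg (PF F) = n}" for F0
  proof -
    define P0 where "P0 = PF F0"
    have F0S: "F0 \<in> S" and sf0: "squarefree P0" and td0: "tdeg P0 = n" using F0 by (auto simp: P0_def)
    have tb0: "tb n P0" using tbF[OF F0S] by (simp add: P0_def)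
    have P00: "P0 \<noteq> 0" using sf0 not_squarefree_0 by auto
    obtain i0 where i0: "i0 \<le> n" "cf P0 i0 (n - i0) \<noteq> 0" using tdeg_top[OF tb0 P00 td0] by blast
    have hp0: "hp P0 n \<noteq> 0" using coeff_hp[OF i0(1), of P0] i0(2) by auto
    have "finite (insert 0 {x. poly (hp P0 n) x = 0})" using poly_roots_finite[OF hp0] by simp
    then obtain c where "c \<notin> insert 0 {x. poly (hp P0 n) x = 0}"
      using ex_new_if_finite[OF infinite_UNIV_char_0] by blast
    hence c0: "c \<noteq> 0" and hc: "poly (hp P0 n) c \<noteq> 0" by auto
    define Q0 where "Q0 = sig c P0"
    have sfQ0: "squarefree Q0"
      by (rule sig_squarefree[of "-c"]) (simp add: Q0_def sig_inv sf0)
    have dQ0: "degree Q0 = n" and lQ0: "lead_coeff Q0 = [:poly (hp P0 n) c:]"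
      using sig_deg[OF tb0 c0 hc] by (auto simp: Q0_def)
    have R0: "resultant Q0 (pderiv Q0) \<noteq> 0" by (rule res_nonzero[OF sfQ0 lQ0 hc])
    then obtain x0 where x0: "poly (resultant Q0 (pderiv Q0)) x0 \<noteq> 0"
      using poly_all_0_iff_0 by blast
    define hF where "hF F = poly (hp (PF F) n) c" for F
    define qF where "qF F = ev x0 (sig c (PF F))" for F
    define GF where "GF F = Determinant.det (sylvester_mat_sub n (n - 1) (qF F) (pderiv (qF F)))" for F
    have hF_cont: "continuous_on S hF"
      unfolding hF_def poly_hp by (intro continuous_intros cfc)
    have q_cont: "continuous_on S (\<lambda>F. coeff (qF F) k)" for k
    proof (rule continuous_on_eq)
      show "continuous_on S (\<lambda>F. \<Sum>j\<le>n. \<Sum>i\<le>n. cf (PF F) i j * poly (coeff (Uc c ^ i * Yc ^ j) k) x0)"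
        by (intro continuous_intros cfc)
      fix F assume "F \<in> S"
      show "(\<Sum>j\<le>n. \<Sum>i\<le>n. cf (PF F) i j * poly (coeff (Uc c ^ i * Yc ^ j) k) x0) = coeff (qF F) k"
        unfolding qF_def by (rule coeff_ev_sig[OF tbF[OF \<open>F \<in> S\<close>], symmetric])
    qed
    have GF_cont: "continuous_on S GF" unfolding GF_def by (rule cont_det_syl[OF q_cont])
    define T where "T = S \<inter> (\<lambda>F. hF F * GF F) -` (- {0})"
    have Topen: "openin (top_of_set S) T" unfolding T_def
      by (rule continuous_openin_preimage_gen) (auto intro: continuous_intros hF_cont GF_cont)
    have degs: "degree (qF F) = n \<and> degree (pderiv (qF F)) = n - 1 \<and> degree (sig c (PF F)) = n
                 \<and> lead_coeff (sig c (PF F)) = [:hF F:]"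
      if "F \<in> S" "hF F \<noteq> 0" for F
    proof -
      have d: "degree (sig c (PF F)) = n" and l: "lead_coeff (sig c (PF F)) = [:hF F:]"
        using sig_deg[OF tbF[OF that(1)] c0] that(2) by (auto simp: hF_def)
      have "degree (qF F) = n" unfolding qF_def using d l that(2) by (subst deg_ev) auto
      thus ?thesis using d l by (simp add: degree_pderiv)
    qed
    have resG: "resultant (qF F) (pderiv (qF F)) = GF F" if "F \<in> S" "hF F \<noteq> 0" for F
      using degs[OF that] by (simp add: resultant_sub resultant_sub_def GF_def)
    have "F0 \<in> T"
    proof -
      have h0: "hF F0 \<noteq> 0" using hc by (simp add: hF_def P0_def)
      have "GF F0 = resultant (qF F0) (pderiv (qF F0))" using resG[OF F0S h0] by simp
      also have "\<dots> = resultant (ev x0 Q0) (ev x0 (pderiv Q0))"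
        by (simp add: qF_def Q0_def P0_def poly_hom.map_poly_pderiv)
      also have "\<dots> = poly (resultant Q0 (pderiv Q0)) x0"
      proof (rule comm_ring_hom.resultant_map_poly)
        show "comm_ring_hom (\<lambda>a. poly a x0)" by unfold_locales
        have e1: "degree (ev x0 Q0) = n" using degs[OF F0S h0] by (simp add: qF_def Q0_def P0_def)
        thus "degree (ev x0 Q0) = degree Q0" using dQ0 by simp
        show "degree (ev x0 (pderiv Q0)) = degree (pderiv Q0)"
          using e1 dQ0 by (simp add: poly_hom.map_poly_pderiv degree_pderiv)
      qed
      finally have "GF F0 \<noteq> 0" using x0 by simp
      thus ?thesis using h0 F0S by (simp add: T_def)
    qed
    moreover have "T \<subseteq> {F \<in> S. squarefree (PF F) \<and> tdeg (PF F) = n}"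
    proof
      fix F assume "F \<in> T"
      hence FS: "F \<in> S" and h: "hF F \<noteq> 0" and G: "GF F \<noteq> 0" by (auto simp: T_def)
      note dg = degs[OF FS h]
      have "squarefree (sig c (PF F))"
      proof (rule sf_from_res[of _ "hF F" x0])
        show "lead_coeff (sig c (PF F)) = [:hF F:]" using dg by blast
        show "hF F \<noteq> 0" by fact
        show "resultant (ev x0 (sig c (PF F))) (pderiv (ev x0 (sig c (PF F)))) \<noteq> 0"
          using resG[OF FS h] G by (simp add: qF_def)
      qed
      hence "squarefree (PF F)" by (rule sig_squarefree)
      moreover have "tdeg (PF F) = n"
      proof -
        have "\<exists>i\<le>n. cf (PF F) i (n - i) \<noteq> 0"
        proof (rule ccontr)
          assume "\<not> ?thesis"
          hence "hF F = 0" unfolding hF_def poly_hp by (auto intro!: sum.neutral)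
          thus False using h by simp
        qed
        then obtain i where "i \<le> n" "cf (PF F) i (n - i) \<noteq> 0" by blast
        thus ?thesis using tdeg_eq[OF tbF[OF FS]] by blast
      qed
      ultimately show "F \<in> {F \<in> S. squarefree (PF F) \<and> tdeg (PF F) = n}" using FS by simp
    qed
    ultimately show "\<exists>T. openin (top_of_set S) T \<and> F0 \<in> T \<and> T \<subseteq> {F \<in> S. squarefree (PF F) \<and> tdeg (PF F) = n}"
      using Topen by blast
  qed
  have "openin (top_of_set S) {F \<in> S. squarefree (PF F) \<and> tdeg (PF F) = n}"
    by (subst openin_subopen) (use key in blast)
  thus ?thesis using U_eq by (simp add: S_def)
qed

end
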